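(* Let $S$ be a Hausdorff semitopological semigroup. If $M$ is a maximal ideal of $Lmc(S)$, then $E(M)$ is an $e$-ultrafilter; and if $\mathcal{A}$ is an $e$-ultrafilter, then $E^-(\mathcal{A})$ is a maximal ideal of $Lmc(S)$. Consequently $M\mapsto E(M)$ is a bijection from the set of maximal ideals of $Lmc(S)$ onto the set of $e$-ultrafilters.
   Context: A Hausdorff semitopological semigroup is a semigroup $S$ with a Hausdorff topology such that all maps $\lambda_s(x)=sx$, $r_s(x)=xs$ are continuous. $\mathcal{CB}(S)$: bounded continuous complex functions with sup norm; $\beta S$ its spectrum with Gelfand topology; $L_sf(x)=f(sx)$, $(T_\mu f)(s)=\mu(L_sf)$; $Lmc(S)=\{f\in\mathcal{CB}(S):T_\mu f\in\mathcal{CB}(S)\ \forall \mu\in\beta S\}$. $Z(Lmc(S))=\{f^{-1}(0):f\in Lmc(S)\}$. $E_\epsilon(f)=\{x\in S:|f(x)|\le\epsilon\}$; $E(I)=\{E_\epsilon(f):f\in I,\epsilon>0\}$; $E^-(\mathcal{A})=\{f\in Lmc(S):E_\epsilon(f)\in\mathcal{A}\ \forall\epsilon>0\}$. A $z$-filter is $\mathcal{A}\subseteq Z(Lmc(S))$ with $\emptyset\notin\mathcal{A}$, $S\in\mathcal{A}$, closed under finite intersections and upward closed within $Z(Lmc(S))$. An $e$-filter is a $z$-filter $\mathcal{A}$ with $E(E^-(\mathcal{A}))=\mathcal{A}$; an $e$-ultrafilter is an $e$-filter not properly contained in any other $e$-filter. *)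

theory Defs
  imports "HOL-Analysis.Analysis"
begin

text \<open>The semigroup S is the whole type 'a (class semigroup_mult) with a
Hausdorff topology (class t2_space). Separate continuity of translations is
assumed in the theorem.\<close>

definition CB :: "('a::topological_space \<Rightarrow> complex) set" where
  "CB = {f. continuous_on UNIV f \<and> bounded (range f)}"

text \<open>betaS: spectrum of CB(S), i.e. nonzero multiplicative linear functionals
on CB(S) (only their values on CB(S) are relevant).\<close>
definition betaS :: "(('a::topological_space \<Rightarrow> complex) \<Rightarrow> complex) set" where
  "betaS = {\<mu>. (\<forall>f\<in>CB. \<forall>g\<in>CB. \<mu> (\<lambda>x. f x + g x) = \<mu> f + \<mu> g)
              \<and> (\<forall>f\<in>CB. \<forall>c. \<mu> (\<lambda>x. c * f x) = c * \<mu> f)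
              \<and> (\<forall>f\<in>CB. \<forall>g\<in>CB. \<mu> (\<lambda>x. f x * g x) = \<mu> f * \<mu> g)
              \<and> (\<exists>f\<in>CB. \<mu> f \<noteq> 0)}"

definition Ltrans :: "'a::times \<Rightarrow> ('a \<Rightarrow> complex) \<Rightarrow> ('a \<Rightarrow> complex)" where
  "Ltrans s f = (\<lambda>x. f (s * x))"

definition Tmu :: "(('a \<Rightarrow> complex) \<Rightarrow> complex) \<Rightarrow> ('a::times \<Rightarrow> complex) \<Rightarrow> ('a \<Rightarrow> complex)" where
  "Tmu \<mu> f = (\<lambda>s. \<mu> (Ltrans s f))"

definition Lmc :: "('a::{topological_space,times} \<Rightarrow> complex) set" where
  "Lmc = {f \<in> CB. \<forall>\<mu>\<in>betaS. Tmu \<mu> f \<in> CB}"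

definition Lmc_ideal :: "('a::{topological_space,times} \<Rightarrow> complex) set \<Rightarrow> bool" where
  "Lmc_ideal I \<longleftrightarrow> I \<subseteq> Lmc \<and> (\<lambda>x. 0) \<in> I
     \<and> (\<forall>f\<in>I. \<forall>g\<in>I. (\<lambda>x. f x + g x) \<in> I)
     \<and> (\<forall>f\<in>I. \<forall>c. (\<lambda>x. c * f x) \<in> I)
     \<and> (\<forall>f\<in>I. \<forall>g\<in>Lmc. (\<lambda>x. g x * f x) \<in> I)"

definition Lmc_maximal_ideal :: "('a::{topological_space,times} \<Rightarrow> complex) set \<Rightarrow> bool" where
  "Lmc_maximal_ideal M \<longleftrightarrow> Lmc_ideal M \<and> M \<noteq> Lmc
     \<and> (\<forall>J. Lmc_ideal J \<and> J \<noteq> Lmc \<and> M \<subseteq> J \<longrightarrow> J = M)"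

definition Zsets :: "'a::{topological_space,times} set set" where
  "Zsets = {{x. f x = 0} | f. f \<in> Lmc}"

definition Eeps :: "('a \<Rightarrow> complex) \<Rightarrow> real \<Rightarrow> 'a set" where
  "Eeps f \<epsilon> = {x. cmod (f x) \<le> \<epsilon>}"

definition Eset :: "('a \<Rightarrow> complex) set \<Rightarrow> 'a set set" where
  "Eset I = {Eeps f \<epsilon> | f \<epsilon>. f \<in> I \<and> \<epsilon> > 0}"

definition Eminus :: "'a::{topological_space,times} set set \<Rightarrow> ('a \<Rightarrow> complex) set" where
  "Eminus \<A> = {f \<in> Lmc. \<forall>\<epsilon>>0. Eeps f \<epsilon> \<in> \<A>}"

definition z_filter :: "'a::{topological_space,times} set set \<Rightarrow> bool" where
  "z_filter \<A> \<longleftrightarrow> \<A> \<subseteq> Zsets \<and> {} \<notin> \<A> \<and> UNIV \<in> \<A>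
     \<and> (\<forall>A\<in>\<A>. \<forall>B\<in>\<A>. A \<inter> B \<in> \<A>)
     \<and> (\<forall>A\<in>\<A>. \<forall>B\<in>Zsets. A \<subseteq> B \<longrightarrow> B \<in> \<A>)"

definition e_filter :: "'a::{topological_space,times} set set \<Rightarrow> bool" where
  "e_filter \<A> \<longleftrightarrow> z_filter \<A> \<and> Eset (Eminus \<A>) = \<A>"

definition e_ultrafilter :: "'a::{topological_space,times} set set \<Rightarrow> bool" where
  "e_ultrafilter \<A> \<longleftrightarrow> e_filter \<A> \<and> (\<forall>\<B>. e_filter \<B> \<and> \<A> \<subseteq> \<B> \<longrightarrow> \<B> = \<A>)"

end

theory Submission
  imports Defs
begin



lemma mult_cnj_cmod: "z * cnj z = complex_of_real ((cmod z)^2)"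
  by (simp add: complex_mult_cnj cmod_def)

lemma cnj_mult_cmod: "cnj z * z = complex_of_real ((cmod z)^2)"
  using mult_cnj_cmod[of z] by (simp add: mult.commute)

lemma CB_const: "(\<lambda>x. c) \<in> CB"
  unfolding CB_def by auto

lemma CB_bounded: "f \<in> CB \<Longrightarrow> \<exists>B\<ge>0. \<forall>x. cmod (f x) \<le> B"
proof -
  assume "f \<in> CB"
  then obtain B where "\<forall>y\<in>range f. norm y \<le> B" unfolding CB_def bounded_iff by auto
  then have "\<forall>x. cmod (f x) \<le> B" by auto
  moreover then have "B \<ge> 0" using norm_ge_zero order_trans by blast
  ultimately show ?thesis by blast
qed

lemma CB_H:
  assumes f: "f \<in> CB" and g: "g \<in> CB" and H: "continuous_on UNIV H"
  shows "(\<lambda>x. H (f x, g x)) \<in> CB"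
proof -
  have cf: "continuous_on UNIV f" and bf: "bounded (range f)"
    and cg: "continuous_on UNIV g" and bg: "bounded (range g)"
    using f g unfolding CB_def by auto
  have c: "continuous_on UNIV (\<lambda>x. H (f x, g x))"
    using continuous_on_compose2[OF H continuous_on_Pair[OF cf cg]] by auto
  have K: "compact (closure (range f) \<times> closure (range g))"
    using bf bg by (simp add: compact_Times compact_closure)
  have "compact (H ` (closure (range f) \<times> closure (range g)))"
    using compact_continuous_image[OF continuous_on_subset[OF H] K] by auto
  then have "bounded (H ` (closure (range f) \<times> closure (range g)))"
    by (rule compact_imp_bounded)
  moreover have "range (\<lambda>x. H (f x, g x)) \<subseteq> H ` (closure (range f) \<times> closure (range g))"
  proof
    fix y assume "y \<in> range (\<lambda>x. H (f x, g x))"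
    then obtain x where y: "y = H (f x, g x)" by auto
    have "f x \<in> closure (range f)" using closure_subset[of "range f"] by blast
    moreover have "g x \<in> closure (range g)" using closure_subset[of "range g"] by blast
    ultimately show "y \<in> H ` (closure (range f) \<times> closure (range g))" unfolding y by blast
  qed
  ultimately have "bounded (range (\<lambda>x. H (f x, g x)))" by (rule bounded_subset)
  with c show ?thesis unfolding CB_def by auto
qed

lemma betaS_add: "\<mu> \<in> betaS \<Longrightarrow> f \<in> CB \<Longrightarrow> g \<in> CB \<Longrightarrow> \<mu> (\<lambda>x. f x + g x) = \<mu> f + \<mu> g"
  unfolding betaS_def by auto
lemma betaS_mult: "\<mu> \<in> betaS \<Longrightarrow> f \<in> CB \<Longrightarrow> g \<in> CB \<Longrightarrow> \<mu> (\<lambda>x. f x * g x) = \<mu> f * \<mu> g"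
  unfolding betaS_def by auto
lemma betaS_scal: "\<mu> \<in> betaS \<Longrightarrow> f \<in> CB \<Longrightarrow> \<mu> (\<lambda>x. c * f x) = c * \<mu> f"
  unfolding betaS_def by auto

lemma betaS_const:
  assumes mu: "\<mu> \<in> betaS" shows "\<mu> (\<lambda>x. c) = c"
proof -
  obtain f where f: "f \<in> CB" "\<mu> f \<noteq> 0" using mu unfolding betaS_def by auto
  have "\<mu> (\<lambda>x. 1 * f x) = \<mu> (\<lambda>x. 1) * \<mu> f"
    using betaS_mult[OF mu CB_const f(1)] .
  then have one: "\<mu> (\<lambda>x. 1) = 1" using f(2) by simp
  have "\<mu> (\<lambda>x. c * 1) = c * \<mu> (\<lambda>x. 1)" using betaS_scal[OF mu CB_const] .
  with one show ?thesis by simp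
qed

lemma betaS_nonzero:
  assumes mu: "\<mu> \<in> betaS" and k: "k \<in> CB" and c: "c > 0" and kc: "\<And>x. cmod (k x) \<ge> c"
  shows "\<mu> k \<noteq> 0"
proof -
  define H where "H = (\<lambda>p::complex\<times>complex. cnj (fst p) / (complex_of_real (max (cmod (fst p)) c))^2)"
  have Hc: "continuous_on UNIV H" unfolding H_def
    using c by (auto intro!: continuous_intros)
  have k': "(\<lambda>x. H (k x, k x)) \<in> CB" using CB_H[OF k k Hc] .
  have eq: "(\<lambda>x. H (k x, k x) * k x) = (\<lambda>x. 1)"
  proof
    fix x
    have "cmod (k x) \<ge> c" by (rule kc)
    then have "max (cmod (k x)) c = cmod (k x)" by simp
    moreover have "k x \<noteq> 0" using kc[of x] c by auto
    ultimately show "H (k x, k x) * k x = 1"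
      unfolding H_def using cnj_mult_cmod[of "k x"]
      by (simp add: field_simps power2_eq_square)
  qed
  have "\<mu> (\<lambda>x. H (k x, k x) * k x) = \<mu> (\<lambda>x. H (k x, k x)) * \<mu> k"
    using betaS_mult[OF mu k' k] .
  then have "\<mu> (\<lambda>x. H (k x, k x)) * \<mu> k = 1" using eq betaS_const[OF mu, of 1] by simp
  then show ?thesis by auto
qed




lemma betaS_H:
  assumes mu: "\<mu> \<in> betaS" and g1: "g1 \<in> CB" and g2: "g2 \<in> CB" and H: "continuous_on UNIV H"
  shows "\<mu> (\<lambda>x. H (g1 x, g2 x)) = H (\<mu> g1, \<mu> g2)"
proof (rule ccontr)
  define a where "a = \<mu> (\<lambda>x. H (g1 x, g2 x))"
  define c1 where "c1 = \<mu> g1"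
  define c2 where "c2 = \<mu> g2"
  define b where "b = H (c1, c2)"
  assume "\<mu> (\<lambda>x. H (g1 x, g2 x)) \<noteq> H (\<mu> g1, \<mu> g2)"
  then have "a \<noteq> b" unfolding a_def b_def c1_def c2_def .
  define d where "d = cmod (a - b)"
  have d: "d > 0" using \<open>a \<noteq> b\<close> unfolding d_def by simp
  obtain \<delta> where \<delta>: "\<delta> > 0" "\<And>p. dist p (c1, c2) < \<delta> \<Longrightarrow> dist (H p) (H (c1,c2)) < d/2"
    using H d unfolding continuous_on_iff by (metis UNIV_I half_gt_zero)
  define K where "K = (\<lambda>p::complex\<times>complex. (H p - a) * cnj (H p - a)
      + ((fst p - c1) * cnj (fst p - c1) + (snd p - c2) * cnj (snd p - c2)))"
  have Kc: "continuous_on UNIV K" unfolding K_def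
    using H by (auto intro!: continuous_intros)
  define k where "k = (\<lambda>x. K (g1 x, g2 x))"
  have kCB: "k \<in> CB" unfolding k_def using CB_H[OF g1 g2 Kc] .
  define m where "m = min (d^2/4) (\<delta>^2/4)"
  have m: "m > 0" unfolding m_def using d \<delta> by simp
  have klow: "cmod (k x) \<ge> m" for x
  proof -
    let ?u = "H (g1 x, g2 x) - a" and ?v1 = "g1 x - c1" and ?v2 = "g2 x - c2"
    have kx: "k x = complex_of_real ((cmod ?u)^2 + ((cmod ?v1)^2 + (cmod ?v2)^2))"
      unfolding k_def K_def mult_cnj_cmod by (simp only: of_real_add fst_conv snd_conv)
    have ck: "cmod (k x) = (cmod ?u)^2 + ((cmod ?v1)^2 + (cmod ?v2)^2)"
      unfolding kx norm_of_real by (rule abs_of_nonneg) simp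
    show ?thesis
    proof (cases "cmod ?v1 < \<delta>/2 \<and> cmod ?v2 < \<delta>/2")
      case True
      have "dist (g1 x, g2 x) (c1, c2) \<le> dist (g1 x, g2 x) (c1, g2 x) + dist (c1, g2 x) (c1, c2)"
        by (rule dist_triangle)
      also have "\<dots> = cmod ?v1 + cmod ?v2" by (simp add: dist_Pair_Pair dist_norm)
      finally have "dist (g1 x, g2 x) (c1, c2) < \<delta>" using True by linarith
      then have "dist (H (g1 x, g2 x)) b < d/2" using \<delta>(2) unfolding b_def by blast
      then have "cmod (H (g1 x, g2 x) - b) < d/2" by (simp add: dist_norm)
      moreover have "d \<le> cmod ?u + cmod (H (g1 x, g2 x) - b)"
        unfolding d_def using norm_triangle_ineq4[of "H (g1 x, g2 x) - b" "H (g1 x, g2 x) - a"]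
        by (simp add: norm_minus_commute)
      ultimately have "cmod ?u \<ge> d/2" by linarith
      then have "(cmod ?u)^2 \<ge> (d/2)^2" using d by (intro power_mono) auto
      then have "(cmod ?u)^2 \<ge> d^2/4" by (simp add: power_divide)
      then show ?thesis unfolding ck m_def by (smt (verit) zero_le_power2)
    next
      case False
      then have "cmod ?v1 \<ge> \<delta>/2 \<or> cmod ?v2 \<ge> \<delta>/2" by auto
      then have "(cmod ?v1)^2 \<ge> (\<delta>/2)^2 \<or> (cmod ?v2)^2 \<ge> (\<delta>/2)^2"
        using \<delta>(1) by (auto intro: power_mono)
      then have "(cmod ?v1)^2 \<ge> \<delta>^2/4 \<or> (cmod ?v2)^2 \<ge> \<delta>^2/4" by (simp add: power_divide)
      then show ?thesis unfolding ck m_def by (smt (verit) zero_le_power2)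
    qed
  qed
  have nz: "\<mu> k \<noteq> 0" using betaS_nonzero[OF mu kCB m klow] .
  have cmu: "\<And>c. \<mu> (\<lambda>x. c) = c" using betaS_const[OF mu] .
  have uCB: "(\<lambda>x. H (g1 x, g2 x)) \<in> CB" using CB_H[OF g1 g2 H] .
  have sub0: "\<mu> (\<lambda>x. f x + (- c)) = 0" if "f \<in> CB" "\<mu> f = c" for f c
    using betaS_add[OF mu that(1) CB_const[of "- c"]] cmu[of "- c"] that(2) by simp
  have prod0: "\<mu> (\<lambda>x. (f x + (- c)) * cnj (f x + (- c))) = 0" if "f \<in> CB" "\<mu> f = c" for f c
  proof -
    have f1: "(\<lambda>x. f x + (- c)) \<in> CB"
      proof -
      have cH: "continuous_on UNIV ((\<lambda>p. fst p + (- c)) :: complex\<times>complex \<Rightarrow> complex)" by (auto intro!: continuous_intros)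
      show ?thesis using CB_H[OF that(1) that(1), of "\<lambda>p. fst p + (- c)", OF cH]  by auto
    qed
    have f2: "(\<lambda>x. cnj (f x + (- c))) \<in> CB"
      proof -
      have cH: "continuous_on UNIV ((\<lambda>p. cnj (fst p + (- c))) :: complex\<times>complex \<Rightarrow> complex)" by (auto intro!: continuous_intros)
      show ?thesis using CB_H[OF that(1) that(1), of "\<lambda>p. cnj (fst p + (- c))", OF cH]  by auto
    qed
    show ?thesis using betaS_mult[OF mu f1 f2] sub0[OF that] by simp
  qed
  have P1: "(\<lambda>x. (H (g1 x, g2 x) + (- a)) * cnj (H (g1 x, g2 x) + (- a))) \<in> CB"
    proof -
      have cH: "continuous_on UNIV ((\<lambda>p. (H p + (- a)) * cnj (H p + (- a))) :: complex\<times>complex \<Rightarrow> complex)" using H by (auto intro!: continuous_intros)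
      show ?thesis using CB_H[OF g1 g2, of "\<lambda>p. (H p + (- a)) * cnj (H p + (- a))", OF cH] H  by auto
    qed
  have P2: "(\<lambda>x. (g1 x + (- c1)) * cnj (g1 x + (- c1))) \<in> CB"
    proof -
      have cH: "continuous_on UNIV ((\<lambda>p. (fst p + (- c1)) * cnj (fst p + (- c1))) :: complex\<times>complex \<Rightarrow> complex)" by (auto intro!: continuous_intros)
      show ?thesis using CB_H[OF g1 g2, of "\<lambda>p. (fst p + (- c1)) * cnj (fst p + (- c1))", OF cH]  by auto
    qed
  have P3: "(\<lambda>x. (g2 x + (- c2)) * cnj (g2 x + (- c2))) \<in> CB"
    proof -
      have cH: "continuous_on UNIV ((\<lambda>p. (snd p + (- c2)) * cnj (snd p + (- c2))) :: complex\<times>complex \<Rightarrow> complex)" by (auto intro!: continuous_intros)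
      show ?thesis using CB_H[OF g1 g2, of "\<lambda>p. (snd p + (- c2)) * cnj (snd p + (- c2))", OF cH]  by auto
    qed
  have P23: "(\<lambda>x. (g1 x + (- c1)) * cnj (g1 x + (- c1)) + (g2 x + (- c2)) * cnj (g2 x + (- c2))) \<in> CB"
  proof -
    have cH: "continuous_on UNIV ((\<lambda>p. (fst p + (- c1)) * cnj (fst p + (- c1)) + (snd p + (- c2)) * cnj (snd p + (- c2))) :: complex\<times>complex \<Rightarrow> complex)"
      by (auto intro!: continuous_intros)
    show ?thesis using CB_H[OF g1 g2, of "\<lambda>p. (fst p + (- c1)) * cnj (fst p + (- c1)) + (snd p + (- c2)) * cnj (snd p + (- c2))", OF cH] by auto
  qed
  have keq: "k = (\<lambda>x. (H (g1 x, g2 x) + (- a)) * cnj (H (g1 x, g2 x) + (- a)) +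
       ((g1 x + (- c1)) * cnj (g1 x + (- c1)) + (g2 x + (- c2)) * cnj (g2 x + (- c2))))"
    unfolding k_def K_def by simp
  have "\<mu> k = \<mu> (\<lambda>x. (H (g1 x, g2 x) + (- a)) * cnj (H (g1 x, g2 x) + (- a))) +
       \<mu> (\<lambda>x. (g1 x + (- c1)) * cnj (g1 x + (- c1)) + (g2 x + (- c2)) * cnj (g2 x + (- c2)))"
    unfolding keq by (rule betaS_add[OF mu P1 P23])
  also have "\<dots> = 0 + (\<mu> (\<lambda>x. (g1 x + (- c1)) * cnj (g1 x + (- c1))) + \<mu> (\<lambda>x. (g2 x + (- c2)) * cnj (g2 x + (- c2))))"
    using prod0[OF uCB a_def[symmetric]] betaS_add[OF mu P2 P3] by simp
  also have "\<dots> = 0"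
    using prod0[OF g1 c1_def[symmetric]] prod0[OF g2 c2_def[symmetric]] by simp
  finally show False using nz by simp
qed

lemma Ltrans_CB:
  fixes f :: "'a::{topological_space,times} \<Rightarrow> complex" and s :: 'a
  assumes ltc: "\<And>s::'a::{topological_space,times}. continuous_on UNIV (\<lambda>x. s * x)"
    and f: "f \<in> CB"
  shows "(\<lambda>x. f (s * x)) \<in> CB"
proof -
  have cf: "continuous_on UNIV f" and bf: "bounded (range f)" using f unfolding CB_def by auto
  have "continuous_on UNIV (\<lambda>x. f (s * x))"
    using continuous_on_compose2[OF cf ltc[of s]] by auto
  moreover have "bounded (range (\<lambda>x. f (s * x)))"
    by (rule bounded_subset[OF bf]) auto
  ultimately show ?thesis unfolding CB_def by auto
qed

lemma Lmc_H:
  fixes f g :: "'a::{topological_space,times} \<Rightarrow> complex"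
  assumes ltc: "\<And>s::'a::{topological_space,times}. continuous_on UNIV (\<lambda>x. s * x)"
    and f: "f \<in> Lmc" and g: "g \<in> Lmc" and H: "continuous_on UNIV H"
  shows "(\<lambda>x. H (f x, g x)) \<in> Lmc"
proof -
  have fC: "f \<in> CB" and gC: "g \<in> CB" using f g unfolding Lmc_def by auto
  have "Tmu \<mu> (\<lambda>x. H (f x, g x)) \<in> CB" if mu: "\<mu> \<in> betaS" for \<mu>
  proof -
    have "Tmu \<mu> (\<lambda>x. H (f x, g x)) = (\<lambda>s. H (Tmu \<mu> f s, Tmu \<mu> g s))"
      unfolding Tmu_def Ltrans_def
      using betaS_H[OF mu Ltrans_CB[OF ltc fC] Ltrans_CB[OF ltc gC] H] by simp
    moreover have "Tmu \<mu> f \<in> CB" "Tmu \<mu> g \<in> CB" using f g mu unfolding Lmc_def by auto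
    ultimately show ?thesis using CB_H[OF _ _ H] by simp
  qed
  then show ?thesis using CB_H[OF fC gC H] unfolding Lmc_def by auto
qed

lemma Lmc_const: "(\<lambda>x. c) \<in> Lmc"
proof -
  have "Tmu \<mu> (\<lambda>x. c) \<in> CB" if "\<mu> \<in> betaS" for \<mu>
  proof -
    have "Tmu \<mu> (\<lambda>x. c) = (\<lambda>s. c)"
      unfolding Tmu_def Ltrans_def using betaS_const[OF that] by simp
    then show ?thesis using CB_const[of c] by simp
  qed
  then show ?thesis unfolding Lmc_def using CB_const by auto
qed

lemma Lmc_H1:
  fixes f :: "'a::{topological_space,times} \<Rightarrow> complex"
  assumes ltc: "\<And>s::'a::{topological_space,times}. continuous_on UNIV (\<lambda>x. s * x)"
    and f: "f \<in> Lmc" and H: "continuous_on UNIV h"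
  shows "(\<lambda>x. h (f x)) \<in> Lmc"
proof -
  have "continuous_on UNIV (\<lambda>p::complex\<times>complex. h (fst p))"
    using continuous_on_compose2[OF H continuous_on_fst[OF continuous_on_id]] by auto
  then show ?thesis using Lmc_H[OF ltc f f, of "\<lambda>p. h (fst p)"] by simp
qed

lemma Lmc_CB: "f \<in> Lmc \<Longrightarrow> f \<in> CB" unfolding Lmc_def by auto




lemma Zsets_I: "f \<in> Lmc \<Longrightarrow> {x. f x = 0} \<in> Zsets"
  unfolding Zsets_def by blast

context
  fixes dummy :: "'a::{topological_space,times}"
  assumes ltc: "\<And>s::'a. continuous_on UNIV (\<lambda>x. s * x)"
begin

lemma Eeps_Z: "f \<in> (Lmc::('a\<Rightarrow>complex) set) \<Longrightarrow> Eeps f \<epsilon> \<in> Zsets"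
proof -
  assume f: "f \<in> Lmc"
  define h where "h = (\<lambda>z::complex. complex_of_real (max (cmod z - \<epsilon>) 0))"
  have "(\<lambda>x. h (f x)) \<in> Lmc" unfolding h_def
    by (rule Lmc_H1[OF ltc f]) (auto intro!: continuous_intros)
  moreover have "Eeps f \<epsilon> = {x. h (f x) = 0}" unfolding Eeps_def h_def by auto
  ultimately show ?thesis using Zsets_I by simp
qed

lemma mem_Eminus:
  assumes zf: "z_filter \<A>" and f: "f \<in> (Lmc::('a\<Rightarrow>complex) set)"
    and h: "\<And>\<epsilon>. \<epsilon> > 0 \<Longrightarrow> \<exists>A\<in>\<A>. A \<subseteq> Eeps f \<epsilon>"
  shows "f \<in> Eminus \<A>"
proof -
  have "Eeps f \<epsilon> \<in> \<A>" if e: "\<epsilon> > 0" for \<epsilon>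
  proof -
    obtain A where A: "A \<in> \<A>" "A \<subseteq> Eeps f \<epsilon>" using h[OF e] by blast
    have up: "\<forall>A\<in>\<A>. \<forall>B\<in>Zsets. A \<subseteq> B \<longrightarrow> B \<in> \<A>" using zf unfolding z_filter_def by simp
    show ?thesis using up A Eeps_Z[OF f] by simp
  qed
  then show ?thesis unfolding Eminus_def using f by auto
qed

lemma Eminus_ideal:
  assumes zf: "z_filter (\<A>::'a set set)"
  shows "Lmc_ideal (Eminus \<A>)" "Eminus \<A> \<noteq> Lmc"
proof -
  have sub: "Eminus \<A> \<subseteq> Lmc" unfolding Eminus_def by auto
  have U: "UNIV \<in> \<A>" and inter: "\<And>A B. A \<in> \<A> \<Longrightarrow> B \<in> \<A> \<Longrightarrow> A \<inter> B \<in> \<A>"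
    and emp: "{} \<notin> \<A>"
    using zf unfolding z_filter_def by auto
  have z: "(\<lambda>x. 0) \<in> Eminus \<A>"
    by (rule mem_Eminus[OF zf Lmc_const]) (use U in \<open>auto simp: Eeps_def\<close>)
  have add: "(\<lambda>x. f x + g x) \<in> Eminus \<A>" if f: "f \<in> Eminus \<A>" and g: "g \<in> Eminus \<A>" for f g
  proof (rule mem_Eminus[OF zf])
    show "(\<lambda>x. f x + g x) \<in> Lmc"
      proof -
      have cH: "continuous_on UNIV ((\<lambda>p. fst p + snd p) :: complex\<times>complex \<Rightarrow> complex)" using f g sub by (auto intro!: continuous_intros)
      show ?thesis using Lmc_H[OF ltc _ _, of f g "\<lambda>p. fst p + snd p", OF _ _ cH] f g sub  by auto
    qed
    fix \<epsilon> :: real assume e: "\<epsilon> > 0"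
    have "Eeps f (\<epsilon>/2) \<in> \<A>" "Eeps g (\<epsilon>/2) \<in> \<A>" using f g e unfolding Eminus_def by auto
    moreover have "Eeps f (\<epsilon>/2) \<inter> Eeps g (\<epsilon>/2) \<subseteq> Eeps (\<lambda>x. f x + g x) \<epsilon>"
    proof
      fix x assume "x \<in> Eeps f (\<epsilon>/2) \<inter> Eeps g (\<epsilon>/2)"
      then have "cmod (f x) \<le> \<epsilon>/2" "cmod (g x) \<le> \<epsilon>/2" by (auto simp: Eeps_def)
      moreover have "cmod (f x + g x) \<le> cmod (f x) + cmod (g x)" by (rule norm_triangle_ineq)
      ultimately show "x \<in> Eeps (\<lambda>x. f x + g x) \<epsilon>" by (simp add: Eeps_def)
    qed
    ultimately show "\<exists>A\<in>\<A>. A \<subseteq> Eeps (\<lambda>x. f x + g x) \<epsilon>" using inter by blast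
  qed
  have mul: "(\<lambda>x. g x * f x) \<in> Eminus \<A>" if f: "f \<in> Eminus \<A>" and g: "g \<in> Lmc" for f g
  proof (rule mem_Eminus[OF zf])
    show "(\<lambda>x. g x * f x) \<in> Lmc"
      proof -
      have cH: "continuous_on UNIV ((\<lambda>p. fst p * snd p) :: complex\<times>complex \<Rightarrow> complex)" using f g sub by (auto intro!: continuous_intros)
      show ?thesis using Lmc_H[OF ltc _ _, of g f "\<lambda>p. fst p * snd p", OF _ _ cH] f g sub  by auto
    qed
    obtain B where B: "B \<ge> 0" "\<And>x. cmod (g x) \<le> B" using CB_bounded[OF Lmc_CB[OF g]] by auto
    fix \<epsilon> :: real assume e: "\<epsilon> > 0"
    have "Eeps f (\<epsilon>/(B+1)) \<in> \<A>" using f e B unfolding Eminus_def by auto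
    moreover have "Eeps f (\<epsilon>/(B+1)) \<subseteq> Eeps (\<lambda>x. g x * f x) \<epsilon>"
    proof
      fix x assume "x \<in> Eeps f (\<epsilon>/(B+1))"
      then have fx: "cmod (f x) \<le> \<epsilon>/(B+1)" unfolding Eeps_def by auto
      have "cmod (g x * f x) = cmod (g x) * cmod (f x)" by (simp add: norm_mult)
      also have "\<dots> \<le> B * (\<epsilon>/(B+1))" using B fx by (intro mult_mono) auto
      also have "\<dots> \<le> \<epsilon>" using B e by (simp add: field_simps)
      finally show "x \<in> Eeps (\<lambda>x. g x * f x) \<epsilon>" unfolding Eeps_def by auto
    qed
    ultimately show "\<exists>A\<in>\<A>. A \<subseteq> Eeps (\<lambda>x. g x * f x) \<epsilon>" by blast
  qed
  have scal: "(\<lambda>x. c * f x) \<in> Eminus \<A>" if f: "f \<in> Eminus \<A>" for f c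
    using mul[OF f Lmc_const[of c]] .
  show "Lmc_ideal (Eminus \<A>)" unfolding Lmc_ideal_def
  proof (intro conjI ballI allI)
    show "Eminus \<A> \<subseteq> Lmc" by (rule sub)
    show "(\<lambda>x. 0) \<in> Eminus \<A>" by (rule z)
    show "(\<lambda>x. f x + g x) \<in> Eminus \<A>" if "f \<in> Eminus \<A>" "g \<in> Eminus \<A>" for f g
      using add[OF that] .
    show "(\<lambda>x. c * f x) \<in> Eminus \<A>" if "f \<in> Eminus \<A>" for f c
      using scal[OF that] .
    show "(\<lambda>x. g x * f x) \<in> Eminus \<A>" if "f \<in> Eminus \<A>" "g \<in> Lmc" for f g
      using mul[OF that] .
  qed
  have "Eeps (\<lambda>x::'a. 1::complex) (1/2) = {}" unfolding Eeps_def by auto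
  moreover have "Eeps (\<lambda>x::'a. 1::complex) (1/2) \<in> \<A>" if "(\<lambda>x::'a. 1::complex) \<in> Eminus \<A>"
    using that unfolding Eminus_def by simp
  ultimately have "(\<lambda>x::'a. 1::complex) \<notin> Eminus \<A>" using emp by auto
  then show "Eminus \<A> \<noteq> Lmc" using Lmc_const[of 1] by auto
qed

end




context
  fixes dummy :: "'a::{topological_space,times}"
  assumes ltc: "\<And>s::'a. continuous_on UNIV (\<lambda>x. s * x)"
begin

lemma Eset_efilter:
  assumes J: "Lmc_ideal (J::('a\<Rightarrow>complex) set)" and Jp: "J \<noteq> Lmc"
  shows "e_filter (Eset J)"
proof -
  have sub: "J \<subseteq> Lmc" and z: "(\<lambda>x. 0) \<in> J"
    and add: "\<And>f g. f \<in> J \<Longrightarrow> g \<in> J \<Longrightarrow> (\<lambda>x. f x + g x) \<in> J"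
    and mul: "\<And>f g. f \<in> J \<Longrightarrow> g \<in> Lmc \<Longrightarrow> (\<lambda>x. g x * f x) \<in> J"
    using J unfolding Lmc_ideal_def by auto
  have EZ: "Eset J \<subseteq> Zsets" unfolding Eset_def using Eeps_Z[OF ltc] sub by blast
  have nemp: "{} \<notin> Eset J"
  proof
    assume "{} \<in> Eset J"
    then obtain f \<epsilon> where f: "f \<in> J" and e: "\<epsilon> > 0" and E: "Eeps f \<epsilon> = {}"
      unfolding Eset_def by auto
    have big: "cmod (f x) > \<epsilon>" for x
    proof -
      have "x \<notin> Eeps f \<epsilon>" using E by auto
      then show ?thesis unfolding Eeps_def by (simp add: not_le)
    qed
    define h where "h = (\<lambda>z::complex. cnj z / (complex_of_real (max (cmod z) \<epsilon>))^2)"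
    have hL: "(\<lambda>x. h (f x)) \<in> Lmc" unfolding h_def
      by (rule Lmc_H1[OF ltc]) (use f sub e in \<open>auto intro!: continuous_intros\<close>)
    have eq: "(\<lambda>x. h (f x) * f x) = (\<lambda>x. 1)"
    proof
      fix x
      have "max (cmod (f x)) \<epsilon> = cmod (f x)" using big[of x] by simp
      moreover have "f x \<noteq> 0" using big[of x] e by auto
      ultimately show "h (f x) * f x = 1"
        unfolding h_def using cnj_mult_cmod[of "f x"]
        by (simp add: field_simps power2_eq_square)
    qed
    have one: "(\<lambda>x. 1) \<in> J" using mul[OF f hL] eq by simp
    have "Lmc \<subseteq> J"
    proof
      fix q :: "'a \<Rightarrow> complex" assume "q \<in> Lmc"
      from mul[OF one this] show "q \<in> J" by simp
    qed
    with sub Jp show False by auto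
  qed
  have univ: "UNIV \<in> Eset J"
  proof -
    have "Eeps (\<lambda>x. 0) 1 = UNIV" unfolding Eeps_def by auto
    then show ?thesis unfolding Eset_def using z by force
  qed
  have inter: "A \<inter> B \<in> Eset J" if A: "A \<in> Eset J" and B: "B \<in> Eset J" for A B
  proof -
    obtain f \<epsilon> where f: "f \<in> J" "\<epsilon> > 0" and Aeq: "A = Eeps f \<epsilon>" using A unfolding Eset_def by auto
    obtain g \<delta> where g: "g \<in> J" "\<delta> > 0" and Beq: "B = Eeps g \<delta>" using B unfolding Eset_def by auto
    define P where "P = (\<lambda>z::complex. (cmod z)^2 / \<epsilon>^2)"
    define R where "R = (\<lambda>z::complex. (cmod z)^2 / \<delta>^2)"
    define F where "F = (\<lambda>p::complex\<times>complex. max (max (P (fst p)) (R (snd p))) (1/2) - 1/2)"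
    define D where "D = (\<lambda>p::complex\<times>complex. max (P (fst p) + R (snd p)) (1/2))"
    define a where "a = (\<lambda>p::complex\<times>complex. complex_of_real (F p / D p / \<epsilon>^2) * cnj (fst p))"
    define b where "b = (\<lambda>p::complex\<times>complex. complex_of_real (F p / D p / \<delta>^2) * cnj (snd p))"
    have fL: "f \<in> Lmc" and gL: "g \<in> Lmc" using f g sub by auto
    have Dpos: "D p > 0" for p unfolding D_def by simp
    have mx: "\<And>r::real. max r (1/2) \<noteq> 0" by (simp add: max_def)
    have aL: "(\<lambda>x. a (f x, g x)) \<in> Lmc"
      by (rule Lmc_H[OF ltc fL gL]) (use Dpos f(2) g(2) mx in \<open>auto simp: a_def F_def D_def P_def R_def intro!: continuous_intros\<close>)
    have bL: "(\<lambda>x. b (f x, g x)) \<in> Lmc"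
      by (rule Lmc_H[OF ltc fL gL]) (use Dpos f(2) g(2) mx in \<open>auto simp: b_def F_def D_def P_def R_def intro!: continuous_intros\<close>)
    define k where "k = (\<lambda>x. a (f x, g x) * f x + b (f x, g x) * g x)"
    have kJ: "k \<in> J" unfolding k_def using add[OF mul[OF f(1) aL] mul[OF g(1) bL]] .
    have kval: "k x = complex_of_real (F (f x, g x))" for x
    proof -
      have "a (f x, g x) * f x = complex_of_real (F (f x, g x) / D (f x, g x) * P (f x))"
        unfolding a_def P_def using cnj_mult_cmod[of "f x"] by (simp add: mult.assoc)
      moreover have "b (f x, g x) * g x = complex_of_real (F (f x, g x) / D (f x, g x) * R (g x))"
        unfolding b_def R_def using cnj_mult_cmod[of "g x"] by (simp add: mult.assoc)
      moreover have "F (f x, g x) / D (f x, g x) * P (f x) + F (f x, g x) / D (f x, g x) * R (g x)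
          = F (f x, g x)"
      proof (cases "F (f x, g x) = 0")
        case True then show ?thesis by simp
      next
        case False
        have P0: "P (f x) \<ge> 0" and R0: "R (g x) \<ge> 0" unfolding P_def R_def by auto
        from False have "max (P (f x)) (R (g x)) > 1/2" unfolding F_def by auto
        then have "P (f x) + R (g x) \<ge> 1/2" using P0 R0 by linarith
        then have "D (f x, g x) = P (f x) + R (g x)" unfolding D_def by simp
        moreover have "F (f x, g x) / D (f x, g x) * P (f x) + F (f x, g x) / D (f x, g x) * R (g x)
            = F (f x, g x) / D (f x, g x) * (P (f x) + R (g x))" by (simp only: distrib_left)
        ultimately show ?thesis using Dpos[of "(f x, g x)"] by simp
      qed
      ultimately show ?thesis unfolding k_def by (metis of_real_add)
    qed
    have F0: "F p \<ge> 0" for p unfolding F_def by simp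
    have "Eeps k (1/2) = A \<inter> B"
    proof -
      have "cmod (k x) \<le> 1/2 \<longleftrightarrow> cmod (f x) \<le> \<epsilon> \<and> cmod (g x) \<le> \<delta>" for x
      proof -
        have "cmod (k x) = F (f x, g x)" using kval F0 by simp
        moreover have "F (f x, g x) \<le> 1/2 \<longleftrightarrow> P (f x) \<le> 1 \<and> R (g x) \<le> 1"
          unfolding F_def by auto
        moreover have "P (f x) \<le> 1 \<longleftrightarrow> cmod (f x) \<le> \<epsilon>"
        proof -
          have "P (f x) \<le> 1 \<longleftrightarrow> (cmod (f x))^2 \<le> \<epsilon>^2" unfolding P_def using f(2) by simp
          also have "\<dots> \<longleftrightarrow> cmod (f x) \<le> \<epsilon>" using f(2) by (simp add: power2_le_iff_abs_le)
          finally show ?thesis .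
        qed
        moreover have "R (g x) \<le> 1 \<longleftrightarrow> cmod (g x) \<le> \<delta>"
        proof -
          have "R (g x) \<le> 1 \<longleftrightarrow> (cmod (g x))^2 \<le> \<delta>^2" unfolding R_def using g(2) by simp
          also have "\<dots> \<longleftrightarrow> cmod (g x) \<le> \<delta>" using g(2) by (simp add: power2_le_iff_abs_le)
          finally show ?thesis .
        qed
        ultimately show ?thesis by simp
      qed
      then show ?thesis unfolding Aeq Beq Eeps_def by auto
    qed
    then show ?thesis unfolding Eset_def using kJ by force
  qed
  have up: "B \<in> Eset J" if A: "A \<in> Eset J" and B: "B \<in> Zsets" and AB: "A \<subseteq> B" for A B
  proof -
    obtain f \<epsilon> where f: "f \<in> J" "\<epsilon> > 0" and Aeq: "A = Eeps f \<epsilon>" using A unfolding Eset_def by auto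
    obtain g where g: "g \<in> Lmc" and Beq: "B = {x. g x = 0}" using B unfolding Zsets_def by auto
    have fL: "f \<in> Lmc" using f sub by auto
    define c where "c = (\<lambda>p::complex\<times>complex. cnj (fst p) / complex_of_real (max (\<epsilon>^2) ((cmod (fst p))^2))
         * (1 + complex_of_real (cmod (snd p))))"
    have mx2: "\<And>r::real. max (\<epsilon>^2) r \<noteq> 0"
    proof -
      fix r :: real
      have "\<epsilon>^2 > 0" using f(2) by simp
      then show "max (\<epsilon>^2) r \<noteq> 0" by (smt (verit))
    qed
    have cL: "(\<lambda>x. c (f x, g x)) \<in> Lmc"
      by (rule Lmc_H[OF ltc fL g]) (use f(2) mx2 in \<open>auto simp: c_def intro!: continuous_intros\<close>)
    define k where "k = (\<lambda>x. c (f x, g x) * f x)"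
    have kJ: "k \<in> J" unfolding k_def using mul[OF f(1) cL] .
    have ck: "cmod (k x) = (cmod (f x))^2 / max (\<epsilon>^2) ((cmod (f x))^2) * (1 + cmod (g x))" for x
    proof -
      have "k x = complex_of_real ((cmod (f x))^2 / max (\<epsilon>^2) ((cmod (f x))^2) * (1 + cmod (g x)))"
        unfolding k_def c_def using cnj_mult_cmod[of "f x"] by (simp add: field_simps)
      then show ?thesis unfolding norm_of_real
        by (simp only: norm_of_real) (rule abs_of_nonneg, intro mult_nonneg_nonneg divide_nonneg_nonneg, auto simp: le_max_iff_disj)
    qed
    have "Eeps k 1 = B"
    proof -
      have "cmod (k x) \<le> 1 \<longleftrightarrow> g x = 0" for x
      proof (cases "g x = 0")
        case True
        have "(cmod (f x))^2 / max (\<epsilon>^2) ((cmod (f x))^2) \<le> 1"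
        proof -
          have "max (\<epsilon>^2) ((cmod (f x))^2) > 0" using f(2) by (simp add: less_max_iff_disj)
          then show ?thesis by (simp add: divide_le_eq_1)
        qed
        then show ?thesis using True ck[of x] by simp
      next
        case False
        then have "x \<notin> A" using AB Beq by auto
        then have "cmod (f x) > \<epsilon>" unfolding Aeq Eeps_def by auto
        then have "(cmod (f x))^2 > \<epsilon>^2" using f(2) by (simp add: power_strict_mono)
        then have r1: "(cmod (f x))^2 / max (\<epsilon>^2) ((cmod (f x))^2) = 1"
          using f(2) by (smt (verit) divide_self zero_le_power2 zero_less_power2)
        have "cmod (k x) = 1 + cmod (g x)" by (subst ck) (simp only: r1 mult_1)
        then show ?thesis using False by simp
      qed
      then show ?thesis unfolding Beq Eeps_def by auto
    qed
    then show ?thesis unfolding Eset_def using kJ by force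
  qed
  have zf: "z_filter (Eset J)" unfolding z_filter_def using EZ nemp univ inter up by blast
  have "Eset (Eminus (Eset J)) = Eset J"
  proof
    show "Eset (Eminus (Eset J)) \<subseteq> Eset J" unfolding Eset_def Eminus_def by auto
    have "J \<subseteq> Eminus (Eset J)" unfolding Eminus_def Eset_def using sub by auto
    then show "Eset J \<subseteq> Eset (Eminus (Eset J))" unfolding Eset_def by blast
  qed
  with zf show ?thesis unfolding e_filter_def by auto
qed

end




lemma Eminus_mono: "\<A> \<subseteq> \<B> \<Longrightarrow> Eminus \<A> \<subseteq> Eminus \<B>" unfolding Eminus_def by auto
lemma Eset_mono: "I \<subseteq> K \<Longrightarrow> Eset I \<subseteq> Eset K" unfolding Eset_def by blast
lemma sub_Eminus_Eset: "Lmc_ideal J \<Longrightarrow> J \<subseteq> Eminus (Eset J)"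
  unfolding Eminus_def Eset_def Lmc_ideal_def by auto

theorem theorem2p9:
  fixes dummy :: "'a::{t2_space, semigroup_mult}"
  assumes "\<And>s::'a. continuous_on UNIV (\<lambda>x. s * x)"
      and "\<And>s::'a. continuous_on UNIV (\<lambda>x. x * s)"
  shows "(\<forall>M::('a \<Rightarrow> complex) set. Lmc_maximal_ideal M \<longrightarrow> e_ultrafilter (Eset M))
       \<and> (\<forall>\<A>::'a set set. e_ultrafilter \<A> \<longrightarrow> Lmc_maximal_ideal (Eminus \<A>))
       \<and> bij_betw Eset {M::('a \<Rightarrow> complex) set. Lmc_maximal_ideal M} {\<A>. e_ultrafilter \<A>}"
proof -
  note ltc = assms(1)
  have C1: "e_ultrafilter (Eset M)" if M: "Lmc_maximal_ideal (M::('a \<Rightarrow> complex) set)" for M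
  proof -
    have MI: "Lmc_ideal M" "M \<noteq> Lmc" and Mmax: "\<And>J. Lmc_ideal J \<and> J \<noteq> Lmc \<and> M \<subseteq> J \<Longrightarrow> J = M"
      using M unfolding Lmc_maximal_ideal_def by auto
    have ef: "e_filter (Eset M)" using Eset_efilter[OF ltc MI] .
    have "\<B> = Eset M" if B: "e_filter \<B>" "Eset M \<subseteq> \<B>" for \<B>
    proof -
      have zB: "z_filter \<B>" and BB: "Eset (Eminus \<B>) = \<B>" using B(1) unfolding e_filter_def by auto
      have "M \<subseteq> Eminus (Eset M)" by (rule sub_Eminus_Eset[OF MI(1)])
      also have "\<dots> \<subseteq> Eminus \<B>" by (rule Eminus_mono[OF B(2)])
      finally have MB: "M \<subseteq> Eminus \<B>" .
      have "Eminus \<B> = M"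
        by (rule Mmax) (use Eminus_ideal[OF ltc zB] MB in simp)
      then show ?thesis using BB by simp
    qed
    then show ?thesis using ef unfolding e_ultrafilter_def by auto
  qed
  have C2: "Lmc_maximal_ideal (Eminus \<A>)" if A: "e_ultrafilter (\<A>::'a set set)" for \<A>
  proof -
    have ef: "e_filter \<A>" and ult: "\<And>\<B>. e_filter \<B> \<and> \<A> \<subseteq> \<B> \<Longrightarrow> \<B> = \<A>"
      using A unfolding e_ultrafilter_def by auto
    have zA: "z_filter \<A>" and AA: "Eset (Eminus \<A>) = \<A>" using ef unfolding e_filter_def by auto
    have "J = Eminus \<A>" if J: "Lmc_ideal J" "J \<noteq> Lmc" "Eminus \<A> \<subseteq> J" for J
    proof -
      have e1: "e_filter (Eset J)" using Eset_efilter[OF ltc J(1,2)] .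
      have e2: "\<A> \<subseteq> Eset J" using Eset_mono[OF J(3)] AA by simp
      have "Eset J = \<A>" by (rule ult) (use e1 e2 in simp)
      then have "J \<subseteq> Eminus \<A>" using sub_Eminus_Eset[OF J(1)] by simp
      with J(3) show ?thesis by (rule subset_antisym[symmetric])
    qed
    then show ?thesis unfolding Lmc_maximal_ideal_def using Eminus_ideal[OF ltc zA] by auto
  qed
  have bk: "Eminus (Eset M) = M" if M: "Lmc_maximal_ideal (M::('a \<Rightarrow> complex) set)" for M
  proof -
    have MI: "Lmc_ideal M" and Mmax: "\<And>J. Lmc_ideal J \<and> J \<noteq> Lmc \<and> M \<subseteq> J \<Longrightarrow> J = M"
      using M unfolding Lmc_maximal_ideal_def by auto
    have "z_filter (Eset M)" using C1[OF M] unfolding e_ultrafilter_def e_filter_def by auto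
    note EI = Eminus_ideal[OF ltc this]
    show ?thesis by (rule Mmax) (use EI sub_Eminus_Eset[OF MI] in simp)
  qed
  have B: "bij_betw Eset {M::('a \<Rightarrow> complex) set. Lmc_maximal_ideal M} {\<A>. e_ultrafilter \<A>}"
  proof (rule bij_betw_byWitness[where f'=Eminus])
    show "\<forall>a\<in>{M::('a \<Rightarrow> complex) set. Lmc_maximal_ideal M}. Eminus (Eset a) = a" using bk by auto
    show "\<forall>a'\<in>{\<A>::'a set set. e_ultrafilter \<A>}. Eset (Eminus a') = a'"
      unfolding e_ultrafilter_def e_filter_def by auto
    show "Eset ` {M::('a \<Rightarrow> complex) set. Lmc_maximal_ideal M} \<subseteq> {\<A>::'a set set. e_ultrafilter \<A>}" using C1 by auto
    show "Eminus ` {\<A>::'a set set. e_ultrafilter \<A>} \<subseteq> {M::('a \<Rightarrow> complex) set. Lmc_maximal_ideal M}" using C2 by auto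
  qed
  show ?thesis using C1 C2 B by simp
qed


end
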